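(* Let $n\ge 1$, let $w_n\ge w_{n-1}\ge\dots\ge w_1>0$ be real weights and let $B\in\{1,\dots,n\}$. Consider minimising the fitness function \[ f(x)=\sum_{i=1}^n w_i x_i+\max\{0,\,B-b(x)\}\cdot(n w_n+1),\qquad b(x)=\sum_{i=1}^n x_i, \] over $x\in\{0,1\}^n$ with either RLS or the (1+1) EA (both defined in the context). Starting with an arbitrary initial search point, the expected number of iterations until the algorithm's current search point is feasible (i.e. satisfies $b(x)\ge B$) is $O\!\left(n\log\frac{n}{n-B}\right)$, where the constant hidden in the $O$-notation does not depend on $n$, the weights, or $B$.
   Context: Problem: minimise $f_{\mathrm{obj}}(x)=\sum_{i=1}^n w_ix_i$ over $x=x_n\cdots x_1\in\{0,1\}^n$ subject to the uniform constraint $x_1+\dots+x_n\ge B$; a search point is feasible if it satisfies the constraint. The algorithms use the penalised fitness $f$ given in the claim. (1+1) EA: maintain a current search point $x_t$ ($x_0$ the initial point); in each iteration create $x'$ by flipping each bit of $x_t$ independently with probability $1/n$; set $x_{t+1}=x'$ if $f(x')\le f(x_t)$, otherwise $x_{t+1}=x_t$. RLS: maintain $x_t$; in each iteration choose $b\in\{1,2\}$ uniformly at random, create $x'$ by flipping $b$ distinct bits of $x_t$ chosen uniformly at random; set $x_{t+1}=x'$ if $f(x')\le f(x_t)$, otherwise $x_{t+1}=x_t$. *)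

theory Defs
  imports "HOL-Probability.Probability"
begin

text \<open>Search points x = x_n ... x_1 in {0,1}^n are represented as functions
  nat => bool; bit i (1 <= i <= n) is x i (True = 1).\<close>

definition ones :: "nat \<Rightarrow> (nat \<Rightarrow> bool) \<Rightarrow> nat" where
  "ones n x = card {i \<in> {1..n}. x i}"

definition fit :: "nat \<Rightarrow> (nat \<Rightarrow> real) \<Rightarrow> nat \<Rightarrow> (nat \<Rightarrow> bool) \<Rightarrow> real" where
  "fit n w B x = (\<Sum>i = 1..n. w i * (if x i then 1 else 0))
     + max 0 (real B - real (ones n x)) * (real n * w n + 1)"

definition feasible :: "nat \<Rightarrow> nat \<Rightarrow> (nat \<Rightarrow> bool) \<Rightarrow> bool" where
  "feasible n B x \<longleftrightarrow> ones n x \<ge> B"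

definition flip :: "(nat \<Rightarrow> bool) \<Rightarrow> (nat \<Rightarrow> bool) \<Rightarrow> nat \<Rightarrow> bool" where
  "flip x F = (\<lambda>i. x i \<noteq> F i)"

definition select :: "nat \<Rightarrow> (nat \<Rightarrow> real) \<Rightarrow> nat \<Rightarrow> (nat \<Rightarrow> bool) \<Rightarrow> (nat \<Rightarrow> bool) \<Rightarrow> nat \<Rightarrow> bool" where
  "select n w B x y = (if fit n w B y \<le> fit n w B x then y else x)"

definition ea_step :: "nat \<Rightarrow> (nat \<Rightarrow> real) \<Rightarrow> nat \<Rightarrow> (nat \<Rightarrow> bool) \<Rightarrow> (nat \<Rightarrow> bool) pmf" where
  "ea_step n w B x =
     map_pmf (\<lambda>F. select n w B x (flip x F))
       (Pi_pmf {1..n} False (\<lambda>_. bernoulli_pmf (1 / real n)))"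

text \<open>One iteration of RLS: choose b in {1,2} uniformly, flip b distinct bits chosen
  uniformly at random. (Convention: if b > n, which only happens for n = 1, no bit is flipped.)\<close>
definition rls_step :: "nat \<Rightarrow> (nat \<Rightarrow> real) \<Rightarrow> nat \<Rightarrow> (nat \<Rightarrow> bool) \<Rightarrow> (nat \<Rightarrow> bool) pmf" where
  "rls_step n w B x =
     do { b \<leftarrow> pmf_of_set {1::nat, 2};
          F \<leftarrow> (if b \<le> n then pmf_of_set {F. F \<subseteq> {1..n} \<and> card F = b} else return_pmf {});
          return_pmf (select n w B x (flip x (\<lambda>i. i \<in> F))) }"

text \<open>survive K P t x = Pr[x_0, ..., x_t all satisfy P] for the Markov chain with kernel K
  started in x_0 = x.\<close>
fun survive :: "('s \<Rightarrow> 's pmf) \<Rightarrow> ('s \<Rightarrow> bool) \<Rightarrow> nat \<Rightarrow> 's \<Rightarrow> ennreal" where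
  "survive K P 0 x = (if P x then 1 else 0)"
| "survive K P (Suc t) x = (if P x then (\<integral>\<^sup>+ y. survive K P t y \<partial>measure_pmf (K x)) else 0)"

text \<open>Expected first time T = min {t. not P x_t}: E[T] = sum_{t>=0} Pr[T > t].\<close>
definition exp_hit :: "('s \<Rightarrow> 's pmf) \<Rightarrow> ('s \<Rightarrow> bool) \<Rightarrow> 's \<Rightarrow> ennreal" where
  "exp_hit K P x = (\<Sum>t. survive K P t x)"

text \<open>The bound n log(n/(n-B)); for B = n this is log(n/0) = +infinity.\<close>
definition bound :: "nat \<Rightarrow> nat \<Rightarrow> ennreal" where
  "bound n B = (if B < n then ennreal (real n * ln (real n / real (n - B))) else \<infinity>)"

end

theory Submission
  imports Defs
begin

lemma ones_le: "ones n x \<le> n"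
proof -
  have "card {i \<in> {1..n}. x i} \<le> card {1..n}" by (rule card_mono) auto
  then show ?thesis unfolding ones_def by simp
qed

lemma w_mono:
  assumes "\<forall>i\<in>{1..<n}. w i \<le> w (Suc i)"
  shows "1 \<le> i \<Longrightarrow> i \<le> j \<Longrightarrow> j \<le> n \<Longrightarrow> (w i :: real) \<le> w j"
proof (induction j)
  case 0 then show ?case by simp
next
  case (Suc j)
  show ?case
  proof (cases "i = Suc j")
    case True then show ?thesis by simp
  next
    case False
    then have "i \<le> j" using Suc by simp
    then have "w i \<le> w j" using Suc by simp
    also have "w j \<le> w (Suc j)" using assms Suc \<open>i \<le> j\<close> by auto
    finally show ?thesis .
  qed
qed

definition W :: "nat \<Rightarrow> (nat \<Rightarrow> real) \<Rightarrow> (nat \<Rightarrow> bool) \<Rightarrow> real" where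
  "W n w x = (\<Sum>i = 1..n. w i * (if x i then 1 else 0))"

lemma W_bounds:
  assumes "w 1 > 0" "\<forall>i\<in>{1..<n}. w i \<le> w (Suc i)"
  shows "0 \<le> W n w x" "W n w x \<le> real n * w n"
proof -
  have wi: "w 1 \<le> w i" "w i \<le> w n" if "i \<in> {1..n}" for i
    using w_mono[OF assms(2)] that by auto
  show "0 \<le> W n w x" unfolding W_def
    using wi assms(1) by (intro sum_nonneg) (fastforce)
  have "W n w x \<le> (\<Sum>i = 1..n. w n)" unfolding W_def
    using wi assms(1) by (intro sum_mono) (fastforce)
  then show "W n w x \<le> real n * w n" by simp
qed

lemma fit_less:
  assumes "w 1 > 0" "\<forall>i\<in>{1..<n}. w i \<le> w (Suc i)"
    and ab: "ones n a < ones n b" and aB: "ones n a < B"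
  shows "fit n w B b < fit n w B a"
proof -
  have "n \<ge> 1" using ab ones_le[of n b] by linarith
  then have wn: "w n > 0" using w_mono[OF assms(2), of 1 n] assms(1) by simp
  define M where "M = real n * w n + 1"
  have M0: "M \<ge> 0" unfolding M_def using wn by simp
  define pa where "pa = real B - real (ones n a)"
  have pa1: "pa \<ge> 1" unfolding pa_def using aB by simp
  have ma: "max 0 (real B - real (ones n a)) = pa" using pa1 pa_def by simp
  have "max 0 (real B - real (ones n b)) \<le> pa - 1" using ab pa1 unfolding pa_def by simp
  then have mb: "max 0 (real B - real (ones n b)) * M \<le> (pa - 1) * M"
    by (rule mult_right_mono) (rule M0)
  have fa: "fit n w B a = W n w a + pa * M" unfolding fit_def W_def M_def using ma by simp
  have fb: "fit n w B b \<le> W n w b + (pa - 1) * M" unfolding fit_def W_def M_def using mb M_def by simp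
  have "W n w b \<le> real n * w n" "0 \<le> W n w a" using W_bounds[OF assms(1,2)] by auto
  then show ?thesis using fa fb unfolding M_def by (simp add: algebra_simps)
qed

lemma sel_ge:
  assumes "w 1 > 0" "\<forall>i\<in>{1..<n}. w i \<le> w (Suc i)" "ones n x < B"
  shows "ones n x \<le> ones n (select n w B x y)"
proof (cases "fit n w B y \<le> fit n w B x")
  case True
  have "\<not> ones n y < ones n x"
  proof
    assume "ones n y < ones n x"
    then have "fit n w B x < fit n w B y" using fit_less[OF assms(1,2)] assms(3) by simp
    then show False using True by simp
  qed
  then show ?thesis using True unfolding select_def by simp
next
  case False then show ?thesis unfolding select_def by simp
qed

lemma sel_up:
  assumes "w 1 > 0" "\<forall>i\<in>{1..<n}. w i \<le> w (Suc i)" "ones n x < B" "ones n x < ones n y"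
  shows "select n w B x y = y"
  using fit_less[OF assms(1,2,4,3)] unfolding select_def by simp

lemma ones_flip1:
  assumes "j \<in> {1..n}" "\<not> x j"
  shows "ones n (flip x (\<lambda>i. i = j)) = Suc (ones n x)"
proof -
  have "{i \<in> {1..n}. flip x (\<lambda>i. i = j) i} = insert j {i \<in> {1..n}. x i}"
    using assms unfolding flip_def by auto
  then show ?thesis unfolding ones_def using assms by simp
qed

lemma card_Z: "card {j \<in> {1..n}. \<not> x j} = n - ones n x"
proof -
  have "{j \<in> {1..n}. \<not> x j} = {1..n} - {i \<in> {1..n}. x i}" by auto
  moreover have "card ({1..n} - {i \<in> {1..n}. x i}) = card {1..n} - card {i \<in> {1..n}. x i}"
    by (rule card_Diff_subset) auto
  ultimately show ?thesis unfolding ones_def by simp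
qed

lemma exp_hit_le:
  fixes g :: "'s \<Rightarrow> ennreal"
  assumes "\<And>x. P x \<Longrightarrow> 1 + (\<integral>\<^sup>+ y. g y \<partial>measure_pmf (K x)) \<le> g x"
  shows "exp_hit K P x \<le> g x"
proof -
  have "(\<Sum>t<N. survive K P t x) \<le> g x" for N x
  proof (induction N arbitrary: x)
    case 0 show ?case by simp
  next
    case (Suc N)
    show ?case
    proof (cases "P x")
      case False
      then have "survive K P t x = 0" for t by (cases t) auto
      then show ?thesis by simp
    next
      case True
      have "(\<Sum>t<Suc N. survive K P t x) = survive K P 0 x + (\<Sum>t<N. survive K P (Suc t) x)"
        by (rule sum.lessThan_Suc_shift)
      also have "\<dots> = 1 + (\<Sum>t<N. \<integral>\<^sup>+ y. survive K P t y \<partial>measure_pmf (K x))" using True by simp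
      also have "\<dots> = 1 + (\<integral>\<^sup>+ y. (\<Sum>t<N. survive K P t y) \<partial>measure_pmf (K x))"
        by (subst nn_integral_sum) auto
      also have "\<dots> \<le> 1 + (\<integral>\<^sup>+ y. g y \<partial>measure_pmf (K x))"
        by (intro add_left_mono nn_integral_mono Suc.IH)
      also have "\<dots> \<le> g x" using assms True .
      finally show ?thesis .
    qed
  qed
  then show ?thesis unfolding exp_hit_def by (intro suminf_le_const) auto
qed


definition G :: "real \<Rightarrow> nat \<Rightarrow> nat \<Rightarrow> (nat \<Rightarrow> bool) \<Rightarrow> real" where
  "G c n B y = c * real n * (\<Sum>z\<in>{n-B<..n - ones n y}. 1 / real z)"

lemma G_nonneg: "c \<ge> 0 \<Longrightarrow> G c n B y \<ge> 0"
  unfolding G_def by (intro mult_nonneg_nonneg sum_nonneg) auto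

lemma step_cond:
  assumes xB: "ones n x < B" and Bn: "B \<le> n" and c0: "c > 0"
    and supp: "\<forall>y\<in>set_pmf M. ones n x \<le> ones n y"
    and pr: "emeasure (measure_pmf M) {y. ones n x < ones n y} \<ge> ennreal (real (n - ones n x) / (c * real n))"
  shows "1 + (\<integral>\<^sup>+y. ennreal (G c n B y) \<partial>measure_pmf M) \<le> ennreal (G c n B x)"
proof -
  define k where "k = n - ones n x"
  define A where "A = {y. ones n x < ones n y}"
  have kB: "k > n - B" "k \<ge> 1" "n \<ge> 1" using xB Bn unfolding k_def by auto
  define d where "d = c * real n / real k"
  have d0: "d > 0" unfolding d_def using kB c0 by simp
  define S' where "S' = (\<Sum>z\<in>{n-B<..k-1}. 1 / real z)"
  have kins: "{n-B<..k} = insert k {n-B<..k-1}" using kB by auto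
  have sk: "(\<Sum>z\<in>{n-B<..k}. 1 / real z) = 1 / real k + S'"
    unfolding kins S'_def using kB by (subst sum.insert) auto
  have Gx: "G c n B x = c * real n * S' + d"
    unfolding G_def k_def[symmetric] sk d_def by (simp add: algebra_simps)
  have pw: "ennreal (G c n B y) + ennreal d * indicator A y \<le> ennreal (G c n B x)"
    if "y \<in> set_pmf M" for y
  proof (cases "y \<in> A")
    case False
    then have "ones n y = ones n x" using supp that unfolding A_def by force
    then show ?thesis using False unfolding G_def by simp
  next
    case True
    then have "n - ones n y \<le> k - 1" unfolding A_def k_def using ones_le[of n y] by auto
    then have "(\<Sum>z\<in>{n-B<..n - ones n y}. 1 / real z) \<le> S'"
      unfolding S'_def by (intro sum_mono2) auto
    then have "G c n B y \<le> c * real n * S'" unfolding G_def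
      using c0 by (intro mult_left_mono) auto
    then have "G c n B y + d \<le> G c n B x" using Gx by simp
    then show ?thesis using True G_nonneg[of c n B y] c0 d0
      by (simp add: ennreal_plus[symmetric] del: ennreal_plus)
  qed
  have "1 \<le> ennreal d * emeasure (measure_pmf M) A"
  proof -
    have "ennreal d * ennreal (real k / (c * real n)) = ennreal 1"
      using d0 kB c0 unfolding d_def by (simp add: ennreal_mult[symmetric])
    moreover have "ennreal d * ennreal (real k / (c * real n)) \<le> ennreal d * emeasure (measure_pmf M) A"
      using pr unfolding A_def k_def by (intro mult_left_mono) auto
    ultimately show ?thesis by simp
  qed
  then have "1 + (\<integral>\<^sup>+y. ennreal (G c n B y) \<partial>measure_pmf M)
      \<le> (\<integral>\<^sup>+y. ennreal (G c n B y) \<partial>measure_pmf M) + ennreal d * emeasure (measure_pmf M) A"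
    by (simp add: add.commute add_right_mono)
  also have "\<dots> = (\<integral>\<^sup>+y. ennreal (G c n B y) + ennreal d * indicator A y \<partial>measure_pmf M)"
    by (subst nn_integral_add) (auto simp: nn_integral_cmult_indicator)
  also have "\<dots> \<le> (\<integral>\<^sup>+y. ennreal (G c n B x) \<partial>measure_pmf M)"
    by (intro nn_integral_mono_AE) (auto simp: AE_measure_pmf_iff pw)
  also have "\<dots> = ennreal (G c n B x)" by (simp add: measure_pmf.emeasure_space_1)
  finally show ?thesis .
qed

lemma harm:
  assumes "1 \<le> m" "m \<le> N"
  shows "(\<Sum>z\<in>{m<..N}. 1 / real z) \<le> ln (real N / real m)"
  using assms(2)
proof (induction N rule: dec_induct)
  case base then show ?case by simp
next
  case (step N)
  have ins: "{m<..Suc N} = insert (Suc N) {m<..N}" using step by auto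
  have N0: "real N > 0" using step assms by simp
  have "ln (real N / real (Suc N)) \<le> real N / real (Suc N) - 1"
    by (rule ln_le_minus_one) (use N0 in simp)
  also have "\<dots> = - (1 / real (Suc N))" by (simp add: field_simps)
  finally have l1: "1 / real (Suc N) \<le> ln (real (Suc N)) - ln (real N)"
    using N0 by (simp add: ln_div)
  have "(\<Sum>z\<in>{m<..Suc N}. 1 / real z) = 1 / real (Suc N) + (\<Sum>z\<in>{m<..N}. 1 / real z)"
    unfolding ins by simp
  also have "\<dots> \<le> (ln (real (Suc N)) - ln (real N)) + ln (real N / real m)"
    using l1 step.IH by linarith
  also have "\<dots> = ln (real (Suc N) / real m)" using N0 assms by (simp add: ln_div)
  finally show ?case .
qed

lemma third: assumes "n \<ge> 2" shows "(1 - 1 / real n) ^ (n - 1) \<ge> 1 / 3"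
proof -
  define m where "m = n - 1"
  have m1: "m \<ge> 1" "n = Suc m" using assms unfolding m_def by auto
  have "(1 + 1 / real m) ^ m \<le> exp (1 / real m) ^ m"
    by (intro power_mono) (auto simp: add.commute exp_ge_add_one_self)
  also have "\<dots> = exp (real m * (1 / real m))" by (rule exp_of_nat_mult[symmetric])
  also have "\<dots> = exp 1" using m1 by simp
  also have "\<dots> \<le> 3" by (rule exp_le)
  finally have h: "(1 + 1 / real m) ^ m \<le> 3" .
  have "1 - 1 / real n = 1 / (1 + 1 / real m)" using m1 by (simp add: field_simps)
  then have "(1 - 1 / real n) ^ (n - 1) = 1 / (1 + 1 / real m) ^ m" unfolding m_def[symmetric]
    by (simp add: power_one_over)
  also have "\<dots> \<ge> 1 / 3" using h m1 by (intro divide_left_mono) (auto intro!: zero_less_power add_pos_nonneg)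
  finally show ?thesis .
qed


lemma ea_supp:
  assumes "w 1 > 0" "\<forall>i\<in>{1..<n}. w i \<le> w (Suc i)" "ones n x < B"
  shows "\<forall>y\<in>set_pmf (ea_step n w B x). ones n x \<le> ones n y"
  unfolding ea_step_def using sel_ge[OF assms] by auto

lemma ea_prob:
  assumes w1: "w 1 > 0" and mono: "\<forall>i\<in>{1..<n}. w i \<le> w (Suc i)"
    and xB: "ones n x < B" and n2: "n \<ge> 2"
  shows "emeasure (measure_pmf (ea_step n w B x)) {y. ones n x < ones n y}
           \<ge> ennreal (real (n - ones n x) / (3 * real n))"
proof -
  define Q where "Q = Pi_pmf {1..n} False (\<lambda>_. bernoulli_pmf (1 / real n))"
  define h where "h = (\<lambda>F. select n w B x (flip x F))"
  define A where "A = {y. ones n x < ones n y}"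
  define Z where "Z = {j \<in> {1..n}. \<not> x j}"
  define E where "E = (\<lambda>j::nat. \<lambda>i::nat. i = j)"
  have sub: "E ` Z \<subseteq> h -` A"
  proof
    fix F assume "F \<in> E ` Z"
    then obtain j where j: "j \<in> Z" "F = E j" by auto
    have o: "ones n (flip x F) = Suc (ones n x)"
      using ones_flip1[of j n x] j unfolding Z_def E_def by auto
    then have "h F = flip x F" unfolding h_def using sel_up[OF w1 mono xB] by simp
    then show "F \<in> h -` A" unfolding A_def using o by simp
  qed
  have p01: "0 \<le> 1 / real n" "1 / real n \<le> 1" using n2 by auto
  have pmfE: "pmf Q (E j) = (1 / real n) * (1 - 1 / real n) ^ (n - 1)" if j: "j \<in> {1..n}" for j
  proof -
    have "pmf Q (E j) = (\<Prod>i\<in>{1..n}. pmf (bernoulli_pmf (1 / real n)) (i = j))"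
      unfolding Q_def E_def using j by (subst pmf_Pi) auto
    also have "\<dots> = pmf (bernoulli_pmf (1 / real n)) True *
        (\<Prod>i\<in>{1..n} - {j}. pmf (bernoulli_pmf (1 / real n)) (i = j))"
      using j by (subst prod.remove[of _ j]) auto
    also have "(\<Prod>i\<in>{1..n} - {j}. pmf (bernoulli_pmf (1 / real n)) (i = j))
        = (\<Prod>i\<in>{1..n} - {j}. 1 - 1 / real n)"
      using p01 by (intro prod.cong) auto
    also have "\<dots> = (1 - 1 / real n) ^ (n - 1)" using j by simp
    finally show ?thesis using p01 by simp
  qed
  have injE: "inj_on E Z" unfolding E_def inj_on_def by (metis)
  have "measure (measure_pmf Q) (E ` Z) = (\<Sum>F\<in>E ` Z. pmf Q F)"
    by (rule measure_measure_pmf_finite) (simp add: Z_def)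
  also have "\<dots> = (\<Sum>j\<in>Z. pmf Q (E j))" using injE by (simp add: sum.reindex)
  also have "\<dots> = (\<Sum>j\<in>Z. (1 / real n) * (1 - 1 / real n) ^ (n - 1))"
    using pmfE unfolding Z_def by (intro sum.cong) auto
  also have "\<dots> = real (n - ones n x) * ((1 / real n) * (1 - 1 / real n) ^ (n - 1))"
    using card_Z[of n x] unfolding Z_def by simp
  finally have mZ: "measure (measure_pmf Q) (E ` Z) = real (n - ones n x) * ((1 / real n) * (1 - 1 / real n) ^ (n - 1))" .
  have "real (n - ones n x) / (3 * real n) = real (n - ones n x) * ((1 / real n) * (1 / 3))"
    by simp
  also have "\<dots> \<le> real (n - ones n x) * ((1 / real n) * (1 - 1 / real n) ^ (n - 1))"
    using third[OF n2] n2 by (intro mult_left_mono) auto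
  also have "\<dots> \<le> measure (measure_pmf Q) (h -` A)"
    unfolding mZ[symmetric] using sub by (intro measure_pmf.finite_measure_mono) auto
  also have "\<dots> = measure (measure_pmf (ea_step n w B x)) A"
    unfolding ea_step_def Q_def h_def by simp
  finally show ?thesis unfolding A_def by (simp add: measure_pmf.emeasure_eq_measure)
qed


lemma rls_eq:
  assumes n2: "n \<ge> 2"
  shows "rls_step n w B x = map_pmf (\<lambda>F. select n w B x (flip x (\<lambda>i. i \<in> F)))
     (bind_pmf (pmf_of_set {1::nat, 2}) (\<lambda>b. pmf_of_set {F. F \<subseteq> {1..n} \<and> card F = b}))"
  unfolding rls_step_def map_bind_pmf
proof (intro bind_pmf_cong refl)
  fix b assume "b \<in> set_pmf (pmf_of_set {1::nat, 2})"
  then have "b \<le> n" using n2 by auto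
  then show "(if b \<le> n then pmf_of_set {F. F \<subseteq> {1..n} \<and> card F = b} else return_pmf {}) \<bind>
          (\<lambda>F. return_pmf (select n w B x (flip x (\<lambda>i. i \<in> F)))) =
         map_pmf (\<lambda>F. select n w B x (flip x (\<lambda>i. i \<in> F))) (pmf_of_set {F. F \<subseteq> {1..n} \<and> card F = b})"
    by (simp add: map_pmf_def)
qed

lemma rls_supp:
  assumes "w 1 > 0" "\<forall>i\<in>{1..<n}. w i \<le> w (Suc i)" "ones n x < B" "n \<ge> 2"
  shows "\<forall>y\<in>set_pmf (rls_step n w B x). ones n x \<le> ones n y"
  unfolding rls_eq[OF assms(4)] using sel_ge[OF assms(1-3)] by auto

lemma rls_prob:
  assumes w1: "w 1 > 0" and mono: "\<forall>i\<in>{1..<n}. w i \<le> w (Suc i)"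
    and xB: "ones n x < B" and n2: "n \<ge> 2"
  shows "emeasure (measure_pmf (rls_step n w B x)) {y. ones n x < ones n y}
           \<ge> ennreal (real (n - ones n x) / (3 * real n))"
proof -
  define S where "S = (\<lambda>b. {F. F \<subseteq> {1..n} \<and> card F = b})"
  define Q where "Q = bind_pmf (pmf_of_set {1::nat, 2}) (\<lambda>b. pmf_of_set (S b))"
  define h where "h = (\<lambda>F. select n w B x (flip x (\<lambda>i. i \<in> F)))"
  define A where "A = {y. ones n x < ones n y}"
  define Z where "Z = {j \<in> {1..n}. \<not> x j}"
  define E where "E = (\<lambda>j::nat. {j})"
  have sub: "E ` Z \<subseteq> h -` A"
  proof
    fix F assume "F \<in> E ` Z"
    then obtain j where j: "j \<in> Z" "F = E j" by auto
    have fl: "flip x (\<lambda>i. i \<in> F) = flip x (\<lambda>i. i = j)" using j unfolding E_def by auto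
    have o: "ones n (flip x (\<lambda>i. i \<in> F)) = Suc (ones n x)"
      using ones_flip1[of j n x] j unfolding Z_def fl by auto
    then have "h F = flip x (\<lambda>i. i \<in> F)" unfolding h_def using sel_up[OF w1 mono xB] by simp
    then show "F \<in> h -` A" unfolding A_def using o by simp
  qed
  have Sfin: "finite (S b)" for b unfolding S_def
    by (rule finite_subset[of _ "Pow {1..n}"]) auto
  have Sne: "S b \<noteq> {}" if "b \<le> n" for b
  proof -
    have "{1..b} \<in> S b" using that unfolding S_def by auto
    then show ?thesis by auto
  qed
  have cS1: "card (S 1) = n" unfolding S_def using n_subsets[of "{1..n}" 1] by simp
  have pmfE: "pmf Q (E j) \<ge> 1 / (2 * real n)" if j: "j \<in> {1..n}" for j
  proof -
    have "pmf Q (E j) = (\<Sum>b\<in>{1::nat, 2}. pmf (pmf_of_set (S b)) (E j)) / 2"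
      unfolding Q_def pmf_bind by (subst integral_pmf_of_set) auto
    also have "\<dots> = (pmf (pmf_of_set (S 1)) (E j) + pmf (pmf_of_set (S 2)) (E j)) / 2" by simp
    also have "pmf (pmf_of_set (S 1)) (E j) = 1 / real n"
      using Sfin[of 1] Sne[of 1] n2 j cS1 unfolding E_def by (simp add: S_def)
    finally have "pmf Q (E j) = (1 / real n + pmf (pmf_of_set (S 2)) (E j)) / 2" .
    moreover have "1 / (2 * real n) = (1 / real n) / 2" by simp
    ultimately show ?thesis using pmf_nonneg[of "pmf_of_set (S 2)" "E j"] by (smt (verit) divide_right_mono)
  qed
  have injE: "inj_on E Z" unfolding E_def inj_on_def by simp
  have "real (n - ones n x) / (3 * real n) \<le> real (n - ones n x) * (1 / (2 * real n))"
    using n2 by (simp add: field_simps)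
  also have "\<dots> = (\<Sum>j\<in>Z. 1 / (2 * real n))" using card_Z[of n x] unfolding Z_def by simp
  also have "\<dots> \<le> (\<Sum>j\<in>Z. pmf Q (E j))"
    using pmfE unfolding Z_def by (intro sum_mono) auto
  also have "\<dots> = (\<Sum>F\<in>E ` Z. pmf Q F)" using injE by (simp add: sum.reindex)
  also have "\<dots> = measure (measure_pmf Q) (E ` Z)"
    by (rule measure_measure_pmf_finite[symmetric]) (simp add: Z_def)
  also have "\<dots> \<le> measure (measure_pmf Q) (h -` A)"
    using sub by (intro measure_pmf.finite_measure_mono) auto
  also have "\<dots> = measure (measure_pmf (rls_step n w B x)) A"
    unfolding rls_eq[OF n2] Q_def h_def S_def by simp
  finally show ?thesis unfolding A_def by (simp add: measure_pmf.emeasure_eq_measure)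
qed


theorem lemma2:
  shows "\<exists>C::real. C > 0 \<and> (\<exists>n0::nat. \<forall>n w B x0.
     n \<ge> max 1 n0 \<and> w 1 > 0 \<and> (\<forall>i\<in>{1..<n}. w i \<le> w (Suc i)) \<and>
     1 \<le> B \<and> B \<le> n \<and> (\<forall>i. i \<notin> {1..n} \<longrightarrow> \<not> x0 i) \<longrightarrow>
       exp_hit (ea_step n w B) (\<lambda>x. \<not> feasible n B x) x0 \<le> ennreal C * bound n B \<and>
       exp_hit (rls_step n w B) (\<lambda>x. \<not> feasible n B x) x0 \<le> ennreal C * bound n B)"
proof (intro exI[of _ "3::real"] conjI exI[of _ "2::nat"] allI impI)
  show "(3::real) > 0" by simp
  fix n :: nat and w :: "nat \<Rightarrow> real" and B :: nat and x0 :: "nat \<Rightarrow> bool"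
  assume H: "max 1 2 \<le> n \<and> w 1 > 0 \<and> (\<forall>i\<in>{1..<n}. w i \<le> w (Suc i)) \<and>
     1 \<le> B \<and> B \<le> n \<and> (\<forall>i. i \<notin> {1..n} \<longrightarrow> \<not> x0 i)"
  then have n2: "n \<ge> 2" and w1: "w 1 > 0" and mono: "\<forall>i\<in>{1..<n}. w i \<le> w (Suc i)"
    and B1: "1 \<le> B" and Bn: "B \<le> n" by auto
  have gen: "exp_hit K (\<lambda>x. \<not> feasible n B x) x0 \<le> ennreal 3 * bound n B"
    if supp: "\<And>x. ones n x < B \<Longrightarrow> \<forall>y\<in>set_pmf (K x). ones n x \<le> ones n y"
    and pr: "\<And>x. ones n x < B \<Longrightarrow> emeasure (measure_pmf (K x)) {y. ones n x < ones n y}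
           \<ge> ennreal (real (n - ones n x) / (3 * real n))" for K
  proof (cases "B < n")
    case False
    then show ?thesis unfolding bound_def by (simp add: ennreal_mult_top)
  next
    case True
    have "exp_hit K (\<lambda>x. \<not> feasible n B x) x0 \<le> ennreal (G 3 n B x0)"
    proof (rule exp_hit_le)
      fix x assume "\<not> feasible n B x"
      then have xB: "ones n x < B" unfolding feasible_def by simp
      show "1 + (\<integral>\<^sup>+ y. ennreal (G 3 n B y) \<partial>measure_pmf (K x)) \<le> ennreal (G 3 n B x)"
        by (rule step_cond[OF xB Bn _ supp[OF xB] pr[OF xB]]) simp
    qed
    also have "ennreal (G 3 n B x0) \<le> ennreal (3 * (real n * ln (real n / real (n - B))))"
    proof (rule ennreal_leI)
      have "(\<Sum>z\<in>{n-B<..n - ones n x0}. 1 / real z) \<le> (\<Sum>z\<in>{n-B<..n}. 1 / real z)"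
        by (intro sum_mono2) auto
      also have "\<dots> \<le> ln (real n / real (n - B))" using True by (intro harm) auto
      finally have "(\<Sum>z\<in>{n-B<..n - ones n x0}. 1 / real z) \<le> ln (real n / real (n - B))" .
      then show "G 3 n B x0 \<le> 3 * (real n * ln (real n / real (n - B)))"
        unfolding G_def by (simp add: mult_left_mono)
    qed
    also have "\<dots> = ennreal 3 * bound n B"
    proof -
      have "real n / real (n - B) \<ge> 1" using True by simp
      then have "ln (real n / real (n - B)) \<ge> 0" by simp
      then show ?thesis unfolding bound_def using True by (simp add: ennreal_mult)
    qed
    finally show ?thesis .
  qed
  show "exp_hit (ea_step n w B) (\<lambda>x. \<not> feasible n B x) x0 \<le> ennreal 3 * bound n B"
    by (rule gen) (erule ea_supp[OF w1 mono], erule ea_prob[OF w1 mono _ n2])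
  show "exp_hit (rls_step n w B) (\<lambda>x. \<not> feasible n B x) x0 \<le> ennreal 3 * bound n B"
    by (rule gen) (erule rls_supp[OF w1 mono _ n2], erule rls_prob[OF w1 mono _ n2])
qed

end
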